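(* Suppose $f:\{0,1\}^n\to\{0,1\}$ is $\varepsilon$-far from every $k$-junta. Then for every quantum $k$-junta $V\in\mathcal{U}_N$ there exists a Boolean function $g:\{0,1\}^n\to\{0,1\}$ that is a $k$-junta such that $\mathrm{dist}(V,U_g)\le\mathrm{dist}(V,U_f)$, where $U_h:=\mathrm{diag}\big((-1)^{h(x)}\big)_{x\in\{0,1\}^n}$ for a Boolean function $h$.
   Context: $N=2^n$, $\mathcal{U}_N$ is the set of $N\times N$ unitaries. A Boolean function $h$ is a $k$-junta if $h(x)=g'(x_{i_1},\dots,x_{i_k})$ for some $g':\{0,1\}^k\to\{0,1\}$ and fixed indices; $f$ is $\varepsilon$-far from every $k$-junta if $\Pr_{x\sim\{0,1\}^n}[f(x)\ne g(x)]\ge\varepsilon$ for every $k$-junta $g$ ($x$ uniform). A unitary $V\in\mathcal{U}_N$ is a quantum $k$-junta if $V=W_S\otimes I_{\overline{S}}$ for some $S\subseteq[n]$ with $|S|=k$ and $W_S\in\mathcal{U}_{2^k}$ acting on the qubits in $S$. For $A,B\in\mathbb{C}^{N\times N}$, $\mathrm{dist}(A,B):=\min_{\theta\in[0,2\pi)}\frac{1}{\sqrt{2N}}\|e^{i\theta}A-B\|$ with $\|\cdot\|$ the Frobenius norm. *)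

theory Defs
  imports Complex_Main
begin

text \<open>Bit strings x in {0,1}^n are modelled as functions nat => bool that are False
  outside {0..<n}; True encodes the bit 1.\<close>
definition cube :: "nat \<Rightarrow> (nat \<Rightarrow> bool) set" where
  "cube n = {x. \<forall>i\<ge>n. \<not> x i}"

text \<open>An N x N complex matrix (N = 2^n) is a function indexed by pairs of bit strings
  in cube n (values outside are irrelevant). Unitary: V^* V = I and V V^* = I on carrier C.\<close>
definition unitary_on :: "(nat \<Rightarrow> bool) set \<Rightarrow> ((nat \<Rightarrow> bool) \<Rightarrow> (nat \<Rightarrow> bool) \<Rightarrow> complex) \<Rightarrow> bool" where
  "unitary_on C V \<longleftrightarrow>
     (\<forall>x\<in>C. \<forall>y\<in>C. (\<Sum>z\<in>C. cnj (V z x) * V z y) = (if x = y then 1 else 0)) \<and>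
     (\<forall>x\<in>C. \<forall>y\<in>C. (\<Sum>z\<in>C. V x z * cnj (V y z)) = (if x = y then 1 else 0))"

definition unitary_mat :: "nat \<Rightarrow> ((nat \<Rightarrow> bool) \<Rightarrow> (nat \<Rightarrow> bool) \<Rightarrow> complex) \<Rightarrow> bool" where
  "unitary_mat n V \<longleftrightarrow> unitary_on (cube n) V"

definition bool_junta :: "nat \<Rightarrow> nat \<Rightarrow> ((nat \<Rightarrow> bool) \<Rightarrow> bool) \<Rightarrow> bool" where
  "bool_junta n k h \<longleftrightarrow>
     (\<exists>idx :: nat \<Rightarrow> nat. \<exists>g' :: (nat \<Rightarrow> bool) \<Rightarrow> bool.
        (\<forall>j<k. idx j < n) \<and>
        (\<forall>x\<in>cube n. h x = g' (\<lambda>j. j < k \<and> x (idx j))))"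

definition disagree :: "nat \<Rightarrow> ((nat \<Rightarrow> bool) \<Rightarrow> bool) \<Rightarrow> ((nat \<Rightarrow> bool) \<Rightarrow> bool) \<Rightarrow> real" where
  "disagree n f g = real (card {x\<in>cube n. f x \<noteq> g x}) / 2 ^ n"

definition far_from_juntas :: "nat \<Rightarrow> nat \<Rightarrow> real \<Rightarrow> ((nat \<Rightarrow> bool) \<Rightarrow> bool) \<Rightarrow> bool" where
  "far_from_juntas n k \<epsilon> f \<longleftrightarrow> (\<forall>g. bool_junta n k g \<longrightarrow> disagree n f g \<ge> \<epsilon>)"

text \<open>Quantum k-junta: V = W_S (x) I_{complement S}, |S| = k, W_S unitary on the qubits in S.
  W_S is indexed by assignments to S (functions False outside S).\<close>
definition restrict_bits :: "nat set \<Rightarrow> (nat \<Rightarrow> bool) \<Rightarrow> (nat \<Rightarrow> bool)" where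
  "restrict_bits S x = (\<lambda>i. i \<in> S \<and> x i)"

definition quantum_junta :: "nat \<Rightarrow> nat \<Rightarrow> ((nat \<Rightarrow> bool) \<Rightarrow> (nat \<Rightarrow> bool) \<Rightarrow> complex) \<Rightarrow> bool" where
  "quantum_junta n k V \<longleftrightarrow>
     (\<exists>S W. S \<subseteq> {0..<n} \<and> card S = k \<and>
        unitary_on {a. \<forall>i. a i \<longrightarrow> i \<in> S} W \<and>
        (\<forall>x\<in>cube n. \<forall>y\<in>cube n.
           V x y = W (restrict_bits S x) (restrict_bits S y) *
                   (if restrict_bits (- S) x = restrict_bits (- S) y then 1 else 0)))"

definition frob :: "nat \<Rightarrow> ((nat \<Rightarrow> bool) \<Rightarrow> (nat \<Rightarrow> bool) \<Rightarrow> complex) \<Rightarrow> real" where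
  "frob n A = sqrt (\<Sum>x\<in>cube n. \<Sum>y\<in>cube n. (cmod (A x y))\<^sup>2)"

definition qdist :: "nat \<Rightarrow> ((nat \<Rightarrow> bool) \<Rightarrow> (nat \<Rightarrow> bool) \<Rightarrow> complex) \<Rightarrow> ((nat \<Rightarrow> bool) \<Rightarrow> (nat \<Rightarrow> bool) \<Rightarrow> complex) \<Rightarrow> real" where
  "qdist n A B = (INF \<theta>\<in>{0..<2*pi}. (1 / sqrt (2 * 2 ^ n)) * frob n (\<lambda>x y. exp (\<i> * of_real \<theta>) * A x y - B x y))"

definition phase_oracle :: "((nat \<Rightarrow> bool) \<Rightarrow> bool) \<Rightarrow> (nat \<Rightarrow> bool) \<Rightarrow> (nat \<Rightarrow> bool) \<Rightarrow> complex" where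
  "phase_oracle h x y = (if x = y then (if h x then -1 else 1) else 0)"

end

theory Submission
  imports Defs
begin

lemma finite_cube: "finite (cube n)"
proof -
  have "cube n \<subseteq> (\<lambda>A i. i \<in> A) ` Pow {0..<n}"
  proof
    fix x assume "x \<in> cube n"
    hence "x = (\<lambda>i. i \<in> {i. x i})" "{i. x i} \<in> Pow {0..<n}"
      by (auto simp: cube_def) (meson not_le)
    thus "x \<in> (\<lambda>A i. i \<in> A) ` Pow {0..<n}" by blast
  qed
  thus ?thesis by (rule finite_subset) simp
qed

definition sgnb :: "bool \<Rightarrow> real" where "sgnb b = (if b then -1 else 1)"

definition Tr :: "nat \<Rightarrow> ((nat \<Rightarrow> bool) \<Rightarrow> (nat \<Rightarrow> bool) \<Rightarrow> complex) \<Rightarrow> ((nat \<Rightarrow> bool) \<Rightarrow> bool) \<Rightarrow> complex"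
  where "Tr n A h = (\<Sum>x\<in>cube n. A x x * of_real (sgnb (h x)))"

lemma cmod_diff_sq: "(cmod (z - w))\<^sup>2 = (cmod z)\<^sup>2 + (cmod w)\<^sup>2 - 2 * Re (z * cnj w)"
  unfolding cmod_power2 by (simp add: power2_eq_square algebra_simps)

lemma frob_sq0: "(frob n A)\<^sup>2 = (\<Sum>x\<in>cube n. \<Sum>y\<in>cube n. (cmod (A x y))\<^sup>2)"
  unfolding frob_def by (rule real_sqrt_pow2) (intro sum_nonneg, simp)

lemma frob_sq:
  assumes "cmod e = 1"
  shows "(frob n (\<lambda>x y. e * A x y - phase_oracle h x y))\<^sup>2 =
     (\<Sum>x\<in>cube n. \<Sum>y\<in>cube n. (cmod (A x y))\<^sup>2) + real (card (cube n)) - 2 * Re (e * Tr n A h)"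
proof -
  have pt: "(cmod (e * A x y - phase_oracle h x y))\<^sup>2 =
      (cmod (A x y))\<^sup>2 + (if x = y then 1 - 2 * Re (e * (A x x * of_real (sgnb (h x)))) else 0)" for x y
    unfolding cmod_diff_sq using assms
    by (auto simp: phase_oracle_def sgnb_def norm_mult)
  define c where "c x = 1 - 2 * Re (e * (A x x * of_real (sgnb (h x))))" for x
  have "(\<Sum>x\<in>cube n. \<Sum>y\<in>cube n. (cmod (e * A x y - phase_oracle h x y))\<^sup>2)
     = (\<Sum>x\<in>cube n. \<Sum>y\<in>cube n. (cmod (A x y))\<^sup>2 + (if x = y then c x else 0))"
    unfolding pt c_def by simp
  also have "\<dots> = (\<Sum>x\<in>cube n. (\<Sum>y\<in>cube n. (cmod (A x y))\<^sup>2) + c x)"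
    by (simp add: sum.distrib finite_cube)
  also have "\<dots> = (\<Sum>x\<in>cube n. \<Sum>y\<in>cube n. (cmod (A x y))\<^sup>2) + (\<Sum>x\<in>cube n. c x)"
    by (simp add: sum.distrib)
  also have "(\<Sum>x\<in>cube n. c x) = real (card (cube n)) - 2 * Re (e * Tr n A h)"
    unfolding c_def Tr_def by (simp add: sum_subtractf sum_distrib_left Re_sum flip: sum_distrib_left)
  finally show ?thesis unfolding frob_sq0 by simp
qed

lemma frob_nonneg: "frob n A \<ge> 0"
  unfolding frob_def by (simp add: sum_nonneg)

lemma qdist_lower:
  "qdist n A (phase_oracle h) \<ge> (1 / sqrt (2 * 2 ^ n)) *
     sqrt ((\<Sum>x\<in>cube n. \<Sum>y\<in>cube n. (cmod (A x y))\<^sup>2) + real (card (cube n)) - 2 * cmod (Tr n A h))"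
  unfolding qdist_def
proof (rule cINF_greatest)
  show "{0..<2*pi} \<noteq> {}" using pi_gt_zero by simp
next
  fix \<theta> :: real
  let ?e = "exp (\<i> * of_real \<theta>)"
  have e1: "cmod ?e = 1" by simp
  have "Re (?e * Tr n A h) \<le> cmod (?e * Tr n A h)" by (rule complex_Re_le_cmod)
  also have "\<dots> = cmod (Tr n A h)" by (simp add: norm_mult)
  finally have le: "Re (?e * Tr n A h) \<le> cmod (Tr n A h)" .
  have "sqrt ((\<Sum>x\<in>cube n. \<Sum>y\<in>cube n. (cmod (A x y))\<^sup>2) + real (card (cube n)) - 2 * cmod (Tr n A h))
     \<le> sqrt ((frob n (\<lambda>x y. ?e * A x y - phase_oracle h x y))\<^sup>2)"
    unfolding frob_sq[OF e1] using le by simp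
  also have "\<dots> = frob n (\<lambda>x y. ?e * A x y - phase_oracle h x y)" using frob_nonneg by simp
  finally show "(1 / sqrt (2 * 2 ^ n)) *
     sqrt ((\<Sum>x\<in>cube n. \<Sum>y\<in>cube n. (cmod (A x y))\<^sup>2) + real (card (cube n)) - 2 * cmod (Tr n A h))
     \<le> 1 / sqrt (2 * 2 ^ n) * frob n (\<lambda>x y. ?e * A x y - phase_oracle h x y)"
    by (simp add: divide_right_mono)
qed

lemma good_angle: "\<exists>\<theta>\<in>{0..<2*pi}. exp (\<i> * of_real \<theta>) * z = of_real (cmod z)"
proof (cases "z = 0")
  case True thus ?thesis using pi_gt_zero by (intro bexI[of _ 0]) auto
next
  case False
  from Arg_correct[OF False] have s: "sgn z = cis (Arg z)" and b: "-pi < Arg z" "Arg z \<le> pi" by auto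
  have z0: "z = of_real (cmod z) * sgn z" using False
    by (simp add: sgn_div_norm scaleR_conv_of_real)
  have z: "z = of_real (cmod z) * cis (Arg z)" using z0 s by simp
  define \<theta> where "\<theta> = (if Arg z \<le> 0 then - Arg z else 2*pi - Arg z)"
  have cth: "cis \<theta> = cis (- Arg z)"
    unfolding \<theta>_def by (simp add: complex_eq_iff)
  have ex: "exp (\<i> * of_real t) = cis t" for t by (simp add: cis_conv_exp mult.commute)
  have "\<theta> \<in> {0..<2*pi}" using b pi_gt_zero unfolding \<theta>_def by auto
  moreover have "exp (\<i> * of_real \<theta>) * z = of_real (cmod z)"
  proof -
    have "exp (\<i> * of_real \<theta>) * z = cis (- Arg z) * (of_real (cmod z) * cis (Arg z))"
      unfolding ex cth using z by simp
    also have "\<dots> = of_real (cmod z)" by (simp add: mult.left_commute cis_mult)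
    finally show ?thesis .
  qed
  ultimately show ?thesis by blast
qed

lemma qdist_upper:
  "qdist n A (phase_oracle h) \<le> (1 / sqrt (2 * 2 ^ n)) *
     sqrt ((\<Sum>x\<in>cube n. \<Sum>y\<in>cube n. (cmod (A x y))\<^sup>2) + real (card (cube n)) - 2 * cmod (Tr n A h))"
proof -
  obtain \<theta> where th: "\<theta> \<in> {0..<2*pi}" and eq: "exp (\<i> * of_real \<theta>) * Tr n A h = of_real (cmod (Tr n A h))"
    using good_angle by blast
  let ?e = "exp (\<i> * of_real \<theta>)"
  have e1: "cmod ?e = 1" by simp
  have "qdist n A (phase_oracle h) \<le> (1 / sqrt (2 * 2 ^ n)) * frob n (\<lambda>x y. ?e * A x y - phase_oracle h x y)"
    unfolding qdist_def
    by (rule cINF_lower[OF _ th], rule bdd_belowI[of _ 0]) (auto simp: frob_nonneg)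
  also have "frob n (\<lambda>x y. ?e * A x y - phase_oracle h x y) = sqrt ((frob n (\<lambda>x y. ?e * A x y - phase_oracle h x y))\<^sup>2)"
    using frob_nonneg by simp
  also have "\<dots> = sqrt ((\<Sum>x\<in>cube n. \<Sum>y\<in>cube n. (cmod (A x y))\<^sup>2) + real (card (cube n)) - 2 * cmod (Tr n A h))"
    unfolding frob_sq[OF e1] eq by simp
  finally show ?thesis .
qed

theorem mainTheorem4:
  fixes n k :: nat and \<epsilon> :: real
    and f :: "(nat \<Rightarrow> bool) \<Rightarrow> bool"
    and V :: "(nat \<Rightarrow> bool) \<Rightarrow> (nat \<Rightarrow> bool) \<Rightarrow> complex"
  assumes "far_from_juntas n k \<epsilon> f"
    and "unitary_mat n V"
    and "quantum_junta n k V"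
  shows "\<exists>g. bool_junta n k g \<and> qdist n V (phase_oracle g) \<le> qdist n V (phase_oracle f)"
proof -
  obtain S W where S: "S \<subseteq> {0..<n}" "card S = k"
    and VW: "\<forall>x\<in>cube n. \<forall>y\<in>cube n.
           V x y = W (restrict_bits S x) (restrict_bits S y) *
                   (if restrict_bits (- S) x = restrict_bits (- S) y then 1 else 0)"
    using assms(3) unfolding quantum_junta_def by blast
  have Vd: "V x x = W (restrict_bits S x) (restrict_bits S x)" if "x \<in> cube n" for x
    using VW that by simp
  define u where "u = (if Tr n V f = 0 then 1 else cnj (Tr n V f) / of_real (cmod (Tr n V f)))"
  have u1: "cmod u \<le> 1" unfolding u_def by (simp add: norm_divide)
  have uT: "u * Tr n V f = of_real (cmod (Tr n V f))"
  proof (cases "Tr n V f = 0")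
    case False
    have "cnj (Tr n V f) * Tr n V f = (of_real (cmod (Tr n V f)))\<^sup>2"
      by (metis complex_norm_square mult.commute of_real_power)
    thus ?thesis using False unfolding u_def by (simp add: power2_eq_square)
  qed (simp add: u_def)
  define G where "G a = (Re (u * W a a) < 0)" for a
  define g where "g x = G (restrict_bits S x)" for x
  have ReT: "Re (u * Tr n V h) = (\<Sum>x\<in>cube n. Re (u * V x x) * sgnb (h x))" for h
    unfolding Tr_def by (simp add: sum_distrib_left Re_sum mult.assoc left_diff_distrib)
  have "cmod (Tr n V f) = Re (u * Tr n V f)" using uT by simp
  also have "\<dots> \<le> (\<Sum>x\<in>cube n. Re (u * V x x) * sgnb (g x))"
    unfolding ReT
  proof (rule sum_mono)
    fix x assume "x \<in> cube n"
    hence "g x = (Re (u * V x x) < 0)" using Vd unfolding g_def G_def by simp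
    thus "Re (u * V x x) * sgnb (f x) \<le> Re (u * V x x) * sgnb (g x)"
      by (auto simp: sgnb_def)
  qed
  also have "\<dots> = Re (u * Tr n V g)" unfolding ReT ..
  also have "\<dots> \<le> cmod (u * Tr n V g)" by (rule complex_Re_le_cmod)
  also have "\<dots> \<le> cmod (Tr n V g)"
    using u1 by (simp add: norm_mult mult_left_le_one_le)
  finally have TT: "cmod (Tr n V f) \<le> cmod (Tr n V g)" .
  have junta: "bool_junta n k g"
  proof -
    have fin: "finite S" using S(1) finite_subset by blast
    obtain idx where bij: "bij_betw idx {0..<k} S"
      using ex_bij_betw_nat_finite[OF fin] S(2) by blast
    define g' where "g' b = G (\<lambda>i. i \<in> S \<and> b (the_inv_into {0..<k} idx i))" for b :: "nat \<Rightarrow> bool"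
    have inj: "inj_on idx {0..<k}" and surj: "idx ` {0..<k} = S"
      using bij bij_betw_imp_inj_on bij_betw_imp_surj_on by blast+
    have "g x = g' (\<lambda>j. j < k \<and> x (idx j))" for x
    proof -
      have "restrict_bits S x = (\<lambda>i. i \<in> S \<and> (the_inv_into {0..<k} idx i < k \<and> x (idx (the_inv_into {0..<k} idx i))))"
      proof
        fix i
        show "restrict_bits S x i = (i \<in> S \<and> (the_inv_into {0..<k} idx i < k \<and> x (idx (the_inv_into {0..<k} idx i))))"
        proof (cases "i \<in> S")
          case True
          hence "the_inv_into {0..<k} idx i \<in> {0..<k}" "idx (the_inv_into {0..<k} idx i) = i"
            using the_inv_into_into[OF inj, of i "{0..<k}"] f_the_inv_into_f[OF inj, of i] surj by auto
          thus ?thesis by (simp add: restrict_bits_def True)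
        qed (simp add: restrict_bits_def)
      qed
      thus ?thesis unfolding g_def g'_def by simp
    qed
    moreover have "\<forall>j<k. idx j < n" using surj S(1) by (auto simp: image_subset_iff)
    ultimately show ?thesis unfolding bool_junta_def by blast
  qed
  have "qdist n V (phase_oracle g) \<le> (1 / sqrt (2 * 2 ^ n)) *
     sqrt ((\<Sum>x\<in>cube n. \<Sum>y\<in>cube n. (cmod (V x y))\<^sup>2) + real (card (cube n)) - 2 * cmod (Tr n V g))"
    by (rule qdist_upper)
  also have "\<dots> \<le> (1 / sqrt (2 * 2 ^ n)) *
     sqrt ((\<Sum>x\<in>cube n. \<Sum>y\<in>cube n. (cmod (V x y))\<^sup>2) + real (card (cube n)) - 2 * cmod (Tr n V f))"
    using TT by (intro mult_left_mono) auto
  also have "\<dots> \<le> qdist n V (phase_oracle f)" by (rule qdist_lower)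
  finally show ?thesis using junta by blast
qed

end
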